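(* Let $L$, $\mathcal{P}_L$, $G$ and $\mathcal{V}\subset\mathcal{N}_L\cap L^\vee$ be as in the context, with $\mathcal{V}$ satisfying (V1)–(V4). Let $f\in\overline{\mathcal{P}}_L\cap L$ be non-zero with $f^2=0$ and $b=\mathbb{R}_{>0}f$. Then there exists $\alpha_0>0$ such that for every $0<\alpha\le\alpha_0$ and every compact subset $J$ of the horosphere $\partial\mathrm{HB}_b(\alpha)$, the number of $\mathcal{V}^*$-chambers that intersect the subset $\pi_L^{-1}(\rho_b^{-1}(J))$ of $\mathcal{P}_L$ is finite.
   Context: $L$ is an even hyperbolic lattice (free $\mathbb{Z}$-module of rank $n>1$ with non-degenerate even symmetric bilinear form $\langle\ ,\ \rangle$ of signature $(1,n-1)$, extended to $L\otimes\mathbb{R}$); $L^\vee$ its dual lattice; $\mathcal{P}_L$ a connected component of $\{x:x^2>0\}$, $\overline{\mathcal{P}}_L$ its closure; $\mathrm{O}^+(L)$ the isometries preserving $\mathcal{P}_L$; $G\subset\mathrm{O}^+(L)$ a subgroup of finite index. $\mathcal{N}_L=\{v: v^2<0\}$, $(v)^\perp=\{x\in\mathcal{P}_L:\langle x,v\rangle=0\}$, $\Sigma_L(\Delta)=\{x:\langle x,v\rangle\ge0\ \forall v\in\Delta\}$. A $\mathcal{V}^*$-chamber is the closure in $\mathcal{P}_L$ of a connected component of $\mathcal{P}_L\setminus\bigcup_{v\in\mathcal{V}}(v)^\perp$; a defining set of such $D$ is $\Delta\subset\mathcal{N}_L\cap L^\vee$ with $D=\Sigma_L(\Delta)\cap\mathcal{P}_L$.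 Conditions: (V1) there is $c>0$ with $-v^2<c$ for all $v\in\mathcal{V}$; (V2) $\mathcal{V}$ is $G$-invariant; (V3) every $\mathcal{V}^*$-chamber has a finite defining set; (V4) for every $\mathcal{V}^*$-chamber $D$, every non-zero $x$ in the closure of $D$ in $L\otimes\mathbb{R}$ with $x^2=0$ is a positive real multiple of a vector of $L$. $\mathcal{H}_L=\mathcal{P}_L/\mathbb{R}_{>0}$ with projection $\pi_L$. $\mathrm{HB}_b(\alpha)=\pi_L(\{x\in\mathcal{P}_L:\langle x,f\rangle^2/x^2\le\alpha\})$ is the closed horoball, $\partial\mathrm{HB}_b(\alpha)$ the horosphere where equality holds (a Euclidean affine space), and $\rho_b:\mathrm{HB}_b(\alpha)\to\partial\mathrm{HB}_b(\alpha)$ sends $p$ to the point of $\partial\mathrm{HB}_b(\alpha)$ on the geodesic through $p$ passing through $b$ at infinity. *)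

theory Defs
  imports "HOL-Analysis.Analysis"
begin

text \<open>The lattice L is modelled as the integer points of real^'n (a basis of L is fixed),
  and the bilinear form is given by its Gram matrix Q (a real matrix with integer entries).\<close>

definition bil :: "real^'n^'n \<Rightarrow> real^'n \<Rightarrow> real^'n \<Rightarrow> real" where
  "bil Q x y = x \<bullet> (Q *v y)"

definition lat :: "(real^'n) set" where
  "lat = {x. \<forall>i. x $ i \<in> \<int>}"

definition dual_lat :: "real^'n^'n \<Rightarrow> (real^'n) set" where
  "dual_lat Q = {v. \<forall>x\<in>lat. bil Q v x \<in> \<int>}"

text \<open>Even hyperbolic lattice of rank n > 1: integral symmetric Gram matrix with even diagonal,
  non-degenerate, of signature (1, n-1) (Sylvester normal form).\<close>
definition even_hyperbolic :: "real^'n::finite^'n \<Rightarrow> bool" where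
  "even_hyperbolic Q \<longleftrightarrow>
     CARD('n) > 1 \<and>
     (\<forall>i j. Q $ i $ j \<in> \<int>) \<and> transpose Q = Q \<and>
     (\<forall>i. \<exists>k::int. Q $ i $ i = 2 * of_int k) \<and>
     det Q \<noteq> 0 \<and>
     (\<exists>(M::real^'n^'n) i0. invertible M \<and>
        transpose M ** Q ** M = (\<chi> i j. if i = j then (if i = i0 then 1 else -1) else 0))"

text \<open>P is a connected component of the positive set {x. x^2 > 0}.\<close>
definition pos_component :: "real^'n^'n \<Rightarrow> (real^'n) set \<Rightarrow> bool" where
  "pos_component Q P \<longleftrightarrow>
     (\<exists>x0. bil Q x0 x0 > 0 \<and> P = connected_component_set {x. bil Q x x > 0} x0)"

definition neg_vecs :: "real^'n^'n \<Rightarrow> (real^'n) set" where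
  "neg_vecs Q = {v. bil Q v v < 0}"

text \<open>O^+(L): isometries of L preserving P (as matrices acting on real^'n).\<close>
definition Oplus :: "real^'n^'n \<Rightarrow> (real^'n) set \<Rightarrow> (real^'n^'n) set" where
  "Oplus Q P = {g. (\<forall>x y. bil Q (g *v x) (g *v y) = bil Q x y) \<and>
                  (\<lambda>x. g *v x) ` lat = lat \<and> (\<lambda>x. g *v x) ` P = P}"

definition finite_index_subgroup ::
    "real^'n^'n \<Rightarrow> (real^'n) set \<Rightarrow> (real^'n^'n) set \<Rightarrow> bool" where
  "finite_index_subgroup Q P G \<longleftrightarrow>
     G \<subseteq> Oplus Q P \<and> mat 1 \<in> G \<and>
     (\<forall>g\<in>G. \<forall>h\<in>G. g ** h \<in> G) \<and> (\<forall>g\<in>G. matrix_inv g \<in> G) \<and>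
     finite {(\<lambda>h. g ** h) ` G | g. g \<in> Oplus Q P}"

definition perp :: "real^'n^'n \<Rightarrow> (real^'n) set \<Rightarrow> real^'n \<Rightarrow> (real^'n) set" where
  "perp Q P v = {x\<in>P. bil Q x v = 0}"

definition Sigma_L :: "real^'n^'n \<Rightarrow> (real^'n) set \<Rightarrow> (real^'n) set" where
  "Sigma_L Q \<Delta> = {x. \<forall>v\<in>\<Delta>. bil Q x v \<ge> 0}"

text \<open>V*-chamber: closure in P of a connected component of P minus the walls.\<close>
definition is_chamber ::
    "real^'n^'n \<Rightarrow> (real^'n) set \<Rightarrow> (real^'n) set \<Rightarrow> (real^'n) set \<Rightarrow> bool" where
  "is_chamber Q P V D \<longleftrightarrow>
     (\<exists>x. x \<in> P - (\<Union>v\<in>V. perp Q P v) \<and>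
          D = closure (connected_component_set (P - (\<Union>v\<in>V. perp Q P v)) x) \<inter> P)"

definition defining_set ::
    "real^'n^'n \<Rightarrow> (real^'n) set \<Rightarrow> (real^'n) set \<Rightarrow> (real^'n) set \<Rightarrow> bool" where
  "defining_set Q P D \<Delta> \<longleftrightarrow> \<Delta> \<subseteq> neg_vecs Q \<inter> dual_lat Q \<and> D = Sigma_L Q \<Delta> \<inter> P"

definition V1 :: "real^'n^'n \<Rightarrow> (real^'n) set \<Rightarrow> bool" where
  "V1 Q V \<longleftrightarrow> (\<exists>c>0. \<forall>v\<in>V. - bil Q v v < c)"

definition V2 :: "(real^'n^'n) set \<Rightarrow> (real^'n) set \<Rightarrow> bool" where
  "V2 G V \<longleftrightarrow> (\<forall>g\<in>G. \<forall>v\<in>V. g *v v \<in> V)"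

definition V3 :: "real^'n^'n \<Rightarrow> (real^'n) set \<Rightarrow> (real^'n) set \<Rightarrow> bool" where
  "V3 Q P V \<longleftrightarrow> (\<forall>D. is_chamber Q P V D \<longrightarrow> (\<exists>\<Delta>. finite \<Delta> \<and> defining_set Q P D \<Delta>))"

definition V4 :: "real^'n^'n \<Rightarrow> (real^'n) set \<Rightarrow> (real^'n) set \<Rightarrow> bool" where
  "V4 Q P V \<longleftrightarrow> (\<forall>D. is_chamber Q P V D \<longrightarrow>
     (\<forall>x\<in>closure D. x \<noteq> 0 \<and> bil Q x x = 0 \<longrightarrow> (\<exists>t>0. \<exists>y\<in>lat. x = t *\<^sub>R y)))"

text \<open>Hyperbolic space H_L = P / R_{>0}, realised as the hyperboloid sheet {x in P. x^2 = 1};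
  the projection pi_L sends x to x / sqrt(x^2).\<close>
definition piL :: "real^'n^'n \<Rightarrow> real^'n \<Rightarrow> real^'n" where
  "piL Q x = (1 / sqrt (bil Q x x)) *\<^sub>R x"

definition horoball ::
    "real^'n^'n \<Rightarrow> (real^'n) set \<Rightarrow> real^'n \<Rightarrow> real \<Rightarrow> (real^'n) set" where
  "horoball Q P f \<alpha> = piL Q ` {x\<in>P. (bil Q x f)\<^sup>2 / bil Q x x \<le> \<alpha>}"

definition horosphere ::
    "real^'n^'n \<Rightarrow> (real^'n) set \<Rightarrow> real^'n \<Rightarrow> real \<Rightarrow> (real^'n) set" where
  "horosphere Q P f \<alpha> = piL Q ` {x\<in>P. (bil Q x f)\<^sup>2 / bil Q x x = \<alpha>}"

text \<open>The geodesic through p having the boundary point b = R_{>0} f at infinity: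
  the image in H_L of the 2-plane spanned by p and f.\<close>
definition geodesic_to ::
    "real^'n^'n \<Rightarrow> (real^'n) set \<Rightarrow> real^'n \<Rightarrow> real^'n \<Rightarrow> (real^'n) set" where
  "geodesic_to Q P f p = piL Q ` (span {p, f} \<inter> P)"

definition rho ::
    "real^'n^'n \<Rightarrow> (real^'n) set \<Rightarrow> real^'n \<Rightarrow> real \<Rightarrow> real^'n \<Rightarrow> real^'n" where
  "rho Q P f \<alpha> p = (THE q. q \<in> horosphere Q P f \<alpha> \<and> q \<in> geodesic_to Q P f p)"

end

theory Submission
  imports Defs
begin


lemma bil_add1[simp]: "bil Q (x + y) z = bil Q x z + bil Q y z"
  by (simp add: bil_def inner_add_left)
lemma bil_add2[simp]: "bil Q z (x + y) = bil Q z x + bil Q z y"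
  by (simp add: bil_def matrix_vector_right_distrib inner_add_right)
lemma bil_diff1[simp]: "bil Q (x - y) z = bil Q x z - bil Q y z"
  by (simp add: bil_def inner_diff_left)
lemma bil_diff2[simp]: "bil Q z (x - y) = bil Q z x - bil Q z y"
  by (simp add: bil_def matrix_vector_mult_diff_distrib inner_diff_right)
lemma bil_scale1[simp]: "bil Q (c *\<^sub>R x) z = c * bil Q x z"
  by (simp add: bil_def)
lemma bil_scale2[simp]: "bil Q z (c *\<^sub>R x) = c * bil Q z x"
  by (simp add: bil_def matrix_vector_mult_scaleR)
lemma bil_zero[simp]: "bil Q 0 z = 0" "bil Q z 0 = 0"
  by (simp_all add: bil_def)
lemma bil_minus[simp]: "bil Q (-x) z = - bil Q x z" "bil Q z (-x) = - bil Q z x"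
  using bil_diff1[of Q 0 x z] bil_diff2[of Q z 0 x] by simp_all

lemma bil_sym: assumes "transpose Q = Q" shows "bil Q x y = bil Q y x"
proof -
  have "bil Q x y = (x v* Q) \<bullet> y" by (simp add: bil_def dot_lmul_matrix)
  also have "\<dots> = (transpose Q *v x) \<bullet> y" by (simp add: transpose_matrix_vector)
  also have "\<dots> = bil Q y x" using assms by (simp add: bil_def inner_commute)
  finally show ?thesis .
qed

lemma bil_change: "bil Q (M *v y) (M *v w) = y \<bullet> ((transpose M ** Q ** M) *v w)"
proof -
  have "bil Q (M *v y) (M *v w) = (M *v y) \<bullet> (Q *v (M *v w))" by (simp add: bil_def)
  also have "\<dots> = ((Q *v (M *v w)) v* M) \<bullet> y" by (metis dot_lmul_matrix inner_commute)
  also have "\<dots> = (transpose M *v (Q *v (M *v w))) \<bullet> y" by (simp add: transpose_matrix_vector)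
  also have "\<dots> = y \<bullet> ((transpose M ** Q ** M) *v w)"
    by (simp add: matrix_vector_mul_assoc inner_commute matrix_mul_assoc)
  finally show ?thesis .
qed

lemma diag_inner:
  fixes y w :: "real^'n"
  shows "y \<bullet> ((\<chi> i j. if i = j then (if i = i0 then 1 else -1) else 0) *v w)
     = y$i0 * w$i0 - (\<chi> i. if i = i0 then 0 else y$i) \<bullet> (\<chi> i. if i = i0 then 0 else w$i)"
proof -
  have mv: "((\<chi> i j. if i = j then (if i = i0 then 1 else -1) else 0) *v w) $ i
        = (if i = i0 then w$i else - w$i)" for i
    by (simp add: matrix_vector_mult_def if_distrib[of "\<lambda>a. a * _"] cong: if_cong)
  have "y \<bullet> ((\<chi> i j. if i = j then (if i = i0 then 1 else -1) else 0) *v w)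
      = (\<Sum>i\<in>UNIV. (if i = i0 then y$i * w$i else - (y$i * w$i)))"
    unfolding inner_vec_def mv by (rule sum.cong) auto
  also have "\<dots> = (\<Sum>i\<in>UNIV. (if i = i0 then y$i * w$i else 0)) - (\<Sum>i\<in>UNIV. (if i = i0 then 0 else y$i * w$i))"
    by (subst sum_subtractf[symmetric]) (rule sum.cong, auto)
  also have "\<dots> = y$i0 * w$i0 - (\<chi> i. if i = i0 then 0 else y$i) \<bullet> (\<chi> i. if i = i0 then 0 else w$i)"
    by (simp add: inner_vec_def if_distrib[of "\<lambda>a. a * _"] cong: if_cong)
  finally show ?thesis .
qed

lemma lor_coord:
  fixes y w :: "real^'n" and a b :: real and Y W :: "real^'n"
  assumes "Y \<bullet> Y \<le> a^2" "y \<noteq> 0 \<or> a^2 > Y \<bullet> Y"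
    and yz: "y = 0 \<longleftrightarrow> a = 0 \<and> Y = 0"
    and orth: "b * a = W \<bullet> Y"
  shows "b^2 \<le> W \<bullet> W" and "a^2 > Y \<bullet> Y \<Longrightarrow> (b = 0 \<and> W = 0) \<or> b^2 < W \<bullet> W"
proof -
  have a0: "a \<noteq> 0"
  proof
    assume "a = 0"
    then have "Y \<bullet> Y \<le> 0" using assms(1) by simp
    then have "Y = 0" by (metis antisym inner_eq_zero_iff inner_ge_zero)
    then show False using assms(2) yz \<open>a = 0\<close> by auto
  qed
  have cs: "(W \<bullet> Y)^2 \<le> (W \<bullet> W) * (Y \<bullet> Y)" by (rule Cauchy_Schwarz_ineq)
  have Y0: "Y \<bullet> Y \<ge> 0" "W \<bullet> W \<ge> 0" by simp_all
  have e: "b^2 * a^2 \<le> (W \<bullet> W) * (Y \<bullet> Y)" using cs orth by (metis power_mult_distrib)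
  also have "\<dots> \<le> (W \<bullet> W) * a^2" using assms(1) Y0 by (simp add: mult_left_mono)
  finally have "b^2 * a^2 \<le> (W \<bullet> W) * a^2" .
  moreover have "a^2 > 0" using a0 by simp
  ultimately show "b^2 \<le> W \<bullet> W" by simp
  assume st: "a^2 > Y \<bullet> Y"
  show "(b = 0 \<and> W = 0) \<or> b^2 < W \<bullet> W"
  proof (cases "W = 0")
    case True
    then have "b * a = 0" using orth by simp
    then show ?thesis using a0 True by simp
  next
    case False
    then have "W \<bullet> W > 0" by simp
    then have "(W \<bullet> W) * (Y \<bullet> Y) < (W \<bullet> W) * a^2" using st by simp
    then have "b^2 * a^2 < (W \<bullet> W) * a^2" using e by linarith
    then show ?thesis using \<open>a^2 > 0\<close> by simp
  qed
qed

lemma zero_split: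
  fixes y :: "real^'n"
  shows "y = 0 \<longleftrightarrow> y$i0 = 0 \<and> (\<chi> i. if i = i0 then 0 else y$i) = 0"
  by (auto simp: vec_eq_iff)

lemma lorentz:
  fixes Q :: "real^'n^'n"
  assumes "even_hyperbolic Q"
  shows "\<And>x u. bil Q x x > 0 \<Longrightarrow> bil Q u x = 0 \<Longrightarrow> u \<noteq> 0 \<Longrightarrow> bil Q u u < 0"
    and "\<And>x u. bil Q x x \<ge> 0 \<Longrightarrow> x \<noteq> 0 \<Longrightarrow> bil Q u x = 0 \<Longrightarrow> bil Q u u \<le> 0"
proof -
  obtain M :: "real^'n^'n" and i0 where Mi: "invertible M"
    and MQ: "transpose M ** Q ** M = (\<chi> i j. if i = j then (if i = i0 then 1 else -1) else 0)"
    using assms unfolding even_hyperbolic_def by blast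
  obtain M' :: "real^'n^'n" where M': "M ** M' = mat 1" using Mi unfolding invertible_def by blast
  have surj: "M *v (M' *v x) = x" for x by (simp add: matrix_vector_mul_assoc M')
  define pr :: "real^'n \<Rightarrow> real^'n" where "pr y = (\<chi> i. if i = i0 then 0 else y$i)" for y
  have key: "bil Q (M *v y) (M *v w) = y$i0 * w$i0 - pr y \<bullet> pr w" for y w
    unfolding bil_change MQ diag_inner pr_def ..
  have M0: "M *v y = 0 \<longleftrightarrow> y = 0" for y
    using inj_matrix_vector_mult[OF Mi] by (metis injD matrix_vector_mult_0_right)
  have zs: "z = 0 \<longleftrightarrow> z$i0 = 0 \<and> pr z = 0" for z unfolding pr_def by (rule zero_split)
  have ppos: "pr y \<bullet> pr y \<le> (y$i0)^2" if "bil Q (M *v y) (M *v y) \<ge> 0" for y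
    using that key[of y y] by (simp add: power2_eq_square)
  {
    fix x u assume h: "bil Q x x > 0" "bil Q u x = 0" "u \<noteq> 0"
    define y where "y = M' *v x"
    define w where "w = M' *v u"
    have hx: "x = M *v y" "u = M *v w" by (simp_all add: y_def w_def surj)
    have k1: "(y$i0)^2 > pr y \<bullet> pr y" using h(1) key[of y y] hx by (simp add: power2_eq_square)
    have k2: "w$i0 * y$i0 = pr w \<bullet> pr y" using h(2) key[of w y] hx by simp
    have "w \<noteq> 0" using h(3) hx by auto
    have r: "(w$i0 = 0 \<and> pr w = 0) \<or> (w$i0)^2 < pr w \<bullet> pr w"
      by (rule lor_coord(2)[of "pr y" "y$i0" y "w$i0" "pr w"])
        (use k1 k2 zs[of y] in auto)
    have "\<not> (w$i0 = 0 \<and> pr w = 0)" using \<open>w \<noteq> 0\<close> zs[of w] by auto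
    then have "(w$i0)^2 < pr w \<bullet> pr w" using r by auto
    then show "bil Q u u < 0" using key[of w w] hx by (simp add: power2_eq_square)
  }
  {
    fix x u assume h: "bil Q x x \<ge> 0" "x \<noteq> 0" "bil Q u x = 0"
    define y where "y = M' *v x"
    define w where "w = M' *v u"
    have hx: "x = M *v y" "u = M *v w" by (simp_all add: y_def w_def surj)
    have k1: "(y$i0)^2 \<ge> pr y \<bullet> pr y" using h(1) key[of y y] hx by (simp add: power2_eq_square)
    have k2: "w$i0 * y$i0 = pr w \<bullet> pr y" using h(3) key[of w y] hx by simp
    have "y \<noteq> 0" using h(2) hx by auto
    have "(w$i0)^2 \<le> pr w \<bullet> pr w"
      by (rule lor_coord(1)[of "pr y" "y$i0" y "w$i0" "pr w"])
        (use k1 k2 \<open>y \<noteq> 0\<close> zs[of y] in auto)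
    then show "bil Q u u \<le> 0" using key[of w w] hx by (simp add: power2_eq_square)
  }
qed

lemma disc:
  fixes A B C :: real
  assumes "\<And>t. A + 2 * t * B + t^2 * C \<le> 0" "C \<le> 0"
  shows "B^2 \<le> A * C"
proof (cases "C = 0")
  case True
  have "B = 0"
  proof (rule ccontr)
    assume "B \<noteq> 0"
    have "A + 2 * ((1 - A) / (2 * B)) * B + ((1 - A) / (2 * B))^2 * C \<le> 0" by (rule assms(1))
    then show False using True \<open>B \<noteq> 0\<close> by (simp add: field_simps)
  qed
  then show ?thesis using True by simp
next
  case False
  then have C: "C < 0" using assms(2) by simp
  have "A + 2 * (- B / C) * B + (- B / C)^2 * C \<le> 0" by (rule assms(1))
  then have "A - B^2 / C \<le> 0" using C by (simp add: power2_eq_square field_simps)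
  then have "A * C - B^2 \<ge> 0" using C by (simp add: field_simps)
  then show ?thesis by simp
qed

lemma gcs:
  fixes Q :: "real^'n^'n"
  assumes eh: "even_hyperbolic Q" and x: "bil Q x x > 0" and vx: "bil Q v x = 0"
  shows "(bil Q v g)^2 \<le> (- bil Q v v) * ((bil Q g x)^2 / bil Q x x - bil Q g g)"
proof -
  have sym: "transpose Q = Q" using eh unfolding even_hyperbolic_def by blast
  have x0: "x \<noteq> 0" using x by auto
  have cs: "(bil Q v w)^2 \<le> bil Q v v * bil Q w w" if wx: "bil Q w x = 0" for w
  proof (rule disc)
    show "bil Q w w \<le> 0" using lorentz(2)[OF eh _ x0 wx] x by simp
    fix t
    have vw0: "bil Q (v + t *\<^sub>R w) x = 0" using vx wx by simp
    have "bil Q (v + t *\<^sub>R w) (v + t *\<^sub>R w) \<le> 0" using lorentz(2)[OF eh _ x0 vw0] x by simp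
    then show "bil Q v v + 2 * t * bil Q v w + t^2 * bil Q w w \<le> 0"
      using bil_sym[OF sym, of w v] by (simp add: algebra_simps power2_eq_square)
  qed
  define k where "k = bil Q g x / bil Q x x"
  define g' where "g' = g - k *\<^sub>R x"
  have g'x: "bil Q g' x = 0" using x by (simp add: g'_def k_def)
  have vg: "bil Q v g' = bil Q v g" using vx by (simp add: g'_def)
  have gg: "bil Q g' g' = bil Q g g - (bil Q g x)^2 / bil Q x x"
    using x bil_sym[OF sym, of x g] by (simp add: g'_def k_def algebra_simps power2_eq_square)
  have "(bil Q v g)^2 \<le> bil Q v v * bil Q g' g'" using cs[OF g'x] vg by simp
  also have "\<dots> = (- bil Q v v) * ((bil Q g x)^2 / bil Q x x - bil Q g g)" unfolding gg by (simp add: algebra_simps)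
  finally show ?thesis .
qed

lemma cont_bil[continuous_intros]:
  assumes "continuous_on S f" "continuous_on S g"
  shows "continuous_on S (\<lambda>x. bil Q (f x) (g x))"
  unfolding bil_def
  by (intro continuous_intros assms bounded_linear.continuous_on[OF matrix_vector_mul_bounded_linear])

lemma open_posset: "open {x::real^'n. bil Q x x > 0}"
  by (rule open_Collect_less) (intro continuous_intros)+

locale PC =
  fixes Q :: "real^'n^'n" and P :: "(real^'n) set"
  assumes eh: "even_hyperbolic Q" and pc: "pos_component Q P"
begin

lemma sym: "transpose Q = Q" using eh unfolding even_hyperbolic_def by blast

lemma symb: "bil Q x y = bil Q y x" using bil_sym[OF sym] .

lemma P_def': obtains x0 where "P = connected_component_set {x. bil Q x x > 0} x0"
  using pc unfolding pos_component_def by blast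

lemma P_pos: "x \<in> P \<Longrightarrow> bil Q x x > 0"
  by (metis (no_types, lifting) P_def' connected_component_subset mem_Collect_eq subsetD)

lemma P_open: "open P"
  by (metis P_def' open_connected_component open_posset)

lemma P_conn: "connected P"
  by (metis P_def' connected_connected_component)

lemma P_comp:
  assumes "x \<in> P" "connected T" "T \<subseteq> {x. bil Q x x > 0}" "x \<in> T"
  shows "T \<subseteq> P"
proof -
  obtain x0 where P: "P = connected_component_set {x. bil Q x x > 0} x0" by (rule P_def')
  have "connected_component_set {x. bil Q x x > 0} x = P"
    using assms(1) unfolding P by (simp add: connected_component_eq)
  moreover have "T \<subseteq> connected_component_set {x. bil Q x x > 0} x"
    by (rule connected_component_maximal) (use assms in auto)
  ultimately show ?thesis by simp
qed

lemma P_inner: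
  assumes "x \<in> P" "y \<in> P" shows "bil Q x y > 0"
proof (rule ccontr)
  assume "\<not> bil Q x y > 0"
  have c: "connected ((\<lambda>z. bil Q x z) ` P)"
    by (rule connected_continuous_image[OF _ P_conn]) (intro continuous_intros)
  have "0 \<in> (\<lambda>z. bil Q x z) ` P"
    by (rule connectedD_interval[OF c, of "bil Q x y" "bil Q x x"])
      (use assms \<open>\<not> bil Q x y > 0\<close> P_pos[of x] in auto)
  then obtain z where z: "z \<in> P" "bil Q x z = 0" by auto
  have "bil Q z z < 0"
    by (rule lorentz(1)[OF eh, of x]) (use z P_pos[OF assms(1)] P_pos[of z] symb in auto)
  then show False using P_pos[OF z(1)] by simp
qed

lemma seg_pos:
  assumes "bil Q x x > 0" "bil Q y y > 0" "bil Q x y > 0" "0 \<le> u" "u \<le> 1"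
  shows "bil Q ((1 - u) *\<^sub>R x + u *\<^sub>R y) ((1 - u) *\<^sub>R x + u *\<^sub>R y) > 0"
proof -
  have e: "bil Q ((1 - u) *\<^sub>R x + u *\<^sub>R y) ((1 - u) *\<^sub>R x + u *\<^sub>R y)
     = (1-u)^2 * bil Q x x + 2 * (u * (1 - u)) * bil Q x y + u^2 * bil Q y y"
    using symb[of x y] by (simp add: algebra_simps power2_eq_square)
  have "u * (1 - u) \<ge> 0" using assms by simp
  moreover have "(1-u)^2 * bil Q x x + u^2 * bil Q y y > 0"
  proof (cases "u = 0")
    case True then show ?thesis using assms by simp
  next
    case False then have "u^2 > 0" by simp
    then have "u^2 * bil Q y y > 0" using assms by simp
    moreover have "(1-u)^2 * bil Q x x \<ge> 0" using assms by simp
    ultimately show ?thesis by simp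
  qed
  ultimately show ?thesis unfolding e using assms(3)
    by (smt (verit) mult_nonneg_nonneg)
qed

lemma P_convex: "convex P"
  unfolding convex_contains_segment
proof (intro ballI)
  fix x y assume xy: "x \<in> P" "y \<in> P"
  show "closed_segment x y \<subseteq> P"
  proof (rule P_comp[OF xy(1) connected_segment])
    show "closed_segment x y \<subseteq> {x. bil Q x x > 0}"
      using seg_pos[OF P_pos[OF xy(1)] P_pos[OF xy(2)] P_inner[OF xy]] by (auto simp: in_segment)
  qed auto
qed

lemma P_cone:
  assumes "x \<in> P" "c > 0" shows "c *\<^sub>R x \<in> P"
proof -
  have "closed_segment x (c *\<^sub>R x) \<subseteq> P"
  proof (rule P_comp[OF assms(1) connected_segment])
    show "closed_segment x (c *\<^sub>R x) \<subseteq> {x. bil Q x x > 0}"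
    proof
      fix z assume "z \<in> closed_segment x (c *\<^sub>R x)"
      then obtain u where u: "0 \<le> u" "u \<le> 1" "z = (1 - u) *\<^sub>R x + u *\<^sub>R (c *\<^sub>R x)"
        by (auto simp: in_segment)
      have "z = ((1 - u) + u * c) *\<^sub>R x" using u by (simp add: algebra_simps)
      moreover have "(1 - u) + u * c > 0" using u assms
        by (smt (verit) mult_nonneg_nonneg mult_pos_pos)
      ultimately show "z \<in> {x. bil Q x x > 0}" using P_pos[OF assms(1)]
        by (simp add: power2_eq_square[symmetric])
    qed
  qed auto
  then show ?thesis by auto
qed

end

lemma piL_eq:
  assumes "bil Q x x > 0" "bil Q y y > 0" "piL Q x = piL Q y"
  shows "y = (sqrt (bil Q y y) / sqrt (bil Q x x)) *\<^sub>R x"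
proof -
  have "(1 / sqrt (bil Q x x)) *\<^sub>R x = (1 / sqrt (bil Q y y)) *\<^sub>R y" using assms(3) by (simp add: piL_def)
  then have "sqrt (bil Q y y) *\<^sub>R ((1 / sqrt (bil Q x x)) *\<^sub>R x) = y" using assms(2) by simp
  then show ?thesis by simp
qed

lemma piL_sq: "bil Q x x > 0 \<Longrightarrow> bil Q (piL Q x) (piL Q x) = 1"
  by (simp add: piL_def)

lemma ratio_scale: "c \<noteq> 0 \<Longrightarrow> (bil Q (c *\<^sub>R y) f)^2 / bil Q (c *\<^sub>R y) (c *\<^sub>R y) = (bil Q y f)^2 / bil Q y y"
  by (simp add: power2_eq_square)

locale PCf = PC +
  fixes f :: "real^'n"
  assumes fcl: "f \<in> closure P" and fnz: "f \<noteq> 0" and ff: "bil Q f f = 0"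
begin

lemma P_f: assumes "x \<in> P" shows "bil Q x f > 0"
proof -
  have "closure P \<subseteq> {y. bil Q x y \<ge> 0}"
  proof (rule closure_minimal)
    show "P \<subseteq> {y. bil Q x y \<ge> 0}" using P_inner[OF assms] by (auto intro: less_imp_le)
    show "closed {y. bil Q x y \<ge> 0}" by (rule closed_Collect_le) (intro continuous_intros)+
  qed
  then have "bil Q x f \<ge> 0" using fcl by auto
  moreover have "bil Q x f \<noteq> 0"
  proof
    assume "bil Q x f = 0"
    then have "bil Q f f < 0" using lorentz(1)[OF eh P_pos[OF assms], of f] fnz symb by auto
    then show False using ff by simp
  qed
  ultimately show ?thesis by simp
qed

lemma horoball_ratio:
  assumes "x \<in> P" "piL Q x \<in> horoball Q P f \<alpha>"
  shows "(bil Q x f)^2 / bil Q x x \<le> \<alpha>"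
proof -
  obtain y where y: "y \<in> P" "(bil Q y f)^2 / bil Q y y \<le> \<alpha>" "piL Q x = piL Q y"
    using assms(2) unfolding horoball_def by auto
  have e: "y = (sqrt (bil Q y y) / sqrt (bil Q x x)) *\<^sub>R x"
    by (rule piL_eq) (use y assms P_pos in auto)
  have "(sqrt (bil Q y y) / sqrt (bil Q x x)) \<noteq> 0" using P_pos[OF y(1)] P_pos[OF assms(1)] by simp
  then show ?thesis using y(2) ratio_scale e by metis
qed

lemma geo_horo_form:
  assumes x: "x \<in> P" and al: "\<alpha> > 0"
    and q: "q \<in> horosphere Q P f \<alpha>" "q \<in> geodesic_to Q P f (piL Q x)"
  shows "\<exists>s m. q = s *\<^sub>R x + m *\<^sub>R f \<and> s * bil Q x f = sqrt \<alpha> \<and> bil Q q q = 1"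
proof -
  obtain y where y: "y \<in> span {piL Q x, f}" "y \<in> P" "q = piL Q y"
    using q(2) unfolding geodesic_to_def by auto
  obtain y' where y': "y' \<in> P" "(bil Q y' f)^2 / bil Q y' y' = \<alpha>" "q = piL Q y'"
    using q(1) unfolding horosphere_def by auto
  have e: "y' = (sqrt (bil Q y' y') / sqrt (bil Q y y)) *\<^sub>R y"
    by (rule piL_eq) (use y y' P_pos in auto)
  have "(sqrt (bil Q y' y') / sqrt (bil Q y y)) \<noteq> 0" using P_pos[OF y(2)] P_pos[OF y'(1)] by simp
  then have ry: "(bil Q y f)^2 / bil Q y y = \<alpha>" using y'(2) ratio_scale e by metis
  have ypos: "bil Q y y > 0" "bil Q y f > 0" using P_pos[OF y(2)] P_f[OF y(2)] by auto
  have qf: "bil Q q f = sqrt \<alpha>"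
  proof -
    have "bil Q q f = bil Q y f / sqrt (bil Q y y)" using y(3) by (simp add: piL_def)
    also have "\<dots> = sqrt ((bil Q y f)^2 / bil Q y y)" using ypos by (simp add: real_sqrt_divide)
    finally show ?thesis using ry by simp
  qed
  obtain k where k: "y - k *\<^sub>R piL Q x \<in> span {f}" using y(1) span_breakdown_eq[of y "piL Q x" "{f}"] by auto
  then obtain m' where m': "y - k *\<^sub>R piL Q x = m' *\<^sub>R f" by (auto simp: span_singleton)
  define s where "s = (k / sqrt (bil Q x x)) / sqrt (bil Q y y)"
  define m where "m = m' / sqrt (bil Q y y)"
  have yform: "y = (k / sqrt (bil Q x x)) *\<^sub>R x + m' *\<^sub>R f"
    using m' by (simp add: piL_def algebra_simps)
  have qform: "q = s *\<^sub>R x + m *\<^sub>R f"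
    unfolding y(3) piL_def s_def m_def yform by (simp add: algebra_simps)
  have "bil Q q f = s * bil Q x f" unfolding qform using ff by simp
  then have "s * bil Q x f = sqrt \<alpha>" using qf by simp
  moreover have "bil Q q q = 1" using y(3) piL_sq ypos by simp
  ultimately show ?thesis using qform by blast
qed

lemma rho_form:
  assumes x: "x \<in> P" and al: "\<alpha> > 0"
  shows "\<exists>s m. rho Q P f \<alpha> (piL Q x) = s *\<^sub>R x + m *\<^sub>R f \<and> s * bil Q x f = sqrt \<alpha>"
proof -
  define a where "a = bil Q x f"
  have a: "a > 0" using P_f[OF x] a_def by simp
  have xx: "bil Q x x > 0" using P_pos[OF x] .
  define t where "t = (a^2 / \<alpha> - bil Q x x) / (2 * a)"
  define y where "y = x + t *\<^sub>R f"
  have sq: "bil Q (x + u *\<^sub>R f) (x + u *\<^sub>R f) = bil Q x x + 2 * u * a" for u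
    using ff symb[of f x] by (simp add: a_def algebra_simps)
  have yy: "bil Q y y = a^2 / \<alpha>" unfolding y_def sq t_def using a by (simp add: field_simps)
  have yf: "bil Q y f = a" unfolding y_def using ff a_def by simp
  have yP: "y \<in> P"
  proof -
    have "closed_segment x y \<subseteq> P"
    proof (rule P_comp[OF x connected_segment])
      show "closed_segment x y \<subseteq> {x. bil Q x x > 0}"
      proof
        fix z assume "z \<in> closed_segment x y"
        then obtain u where u: "0 \<le> u" "u \<le> 1" "z = (1 - u) *\<^sub>R x + u *\<^sub>R y"
          by (auto simp: in_segment)
        have z: "z = x + (u * t) *\<^sub>R f" using u by (simp add: y_def algebra_simps)
        have "bil Q z z = (1 - u) * bil Q x x + u * (a^2 / \<alpha>)"
          unfolding z sq using yy sq[of t] unfolding y_def by (simp add: algebra_simps)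
        moreover have "a^2 / \<alpha> > 0" using a al by simp
        ultimately have "bil Q z z > 0" using u xx
          by (smt (verit) mult_nonneg_nonneg mult_pos_pos)
        then show "z \<in> {x. bil Q x x > 0}" by simp
      qed
    qed auto
    then show ?thesis by auto
  qed
  have ry: "(bil Q y f)^2 / bil Q y y = \<alpha>" using yy yf a al by simp
  have ysp: "y \<in> span {piL Q x, f}"
  proof -
    have "x = sqrt (bil Q x x) *\<^sub>R piL Q x" using xx by (simp add: piL_def)
    then have "y = sqrt (bil Q x x) *\<^sub>R piL Q x + t *\<^sub>R f" unfolding y_def by simp
    then show ?thesis by (simp add: span_add span_base span_scale)
  qed
  have ex: "piL Q y \<in> horosphere Q P f \<alpha> \<and> piL Q y \<in> geodesic_to Q P f (piL Q x)"
    unfolding horosphere_def geodesic_to_def using yP ry ysp by auto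
  have un: "q1 = q2" if h1: "q1 \<in> horosphere Q P f \<alpha> \<and> q1 \<in> geodesic_to Q P f (piL Q x)"
      and h2: "q2 \<in> horosphere Q P f \<alpha> \<and> q2 \<in> geodesic_to Q P f (piL Q x)" for q1 q2
  proof -
    obtain s1 m1 where 1: "q1 = s1 *\<^sub>R x + m1 *\<^sub>R f" "s1 * a = sqrt \<alpha>" "bil Q q1 q1 = 1"
      using geo_horo_form[OF x al conjunct1[OF h1] conjunct2[OF h1]] by (auto simp: a_def)
    obtain s2 m2 where 2: "q2 = s2 *\<^sub>R x + m2 *\<^sub>R f" "s2 * a = sqrt \<alpha>" "bil Q q2 q2 = 1"
      using geo_horo_form[OF x al conjunct1[OF h2] conjunct2[OF h2]] by (auto simp: a_def)
    have s: "s1 = s2" using 1(2) 2(2) a by (metis nonzero_mult_div_cancel_right less_irrefl)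
    have qq: "bil Q (s *\<^sub>R x + m *\<^sub>R f) (s *\<^sub>R x + m *\<^sub>R f) = s^2 * bil Q x x + 2 * (s * a) * m" for s m
      using ff symb[of f x] by (simp add: a_def algebra_simps power2_eq_square)
    have e1: "s1^2 * bil Q x x + 2 * sqrt \<alpha> * m1 = 1" using 1(3) qq[of s1 m1] 1(2) unfolding 1(1) by simp
    have e2: "s2^2 * bil Q x x + 2 * sqrt \<alpha> * m2 = 1" using 2(3) qq[of s2 m2] 2(2) unfolding 2(1) by simp
    have "2 * sqrt \<alpha> * m1 = 2 * sqrt \<alpha> * m2" using e1 e2 unfolding s by linarith
    then have "m1 = m2" using al by simp
    then show ?thesis using 1(1) 2(1) s by simp
  qed
  have "rho Q P f \<alpha> (piL Q x) \<in> horosphere Q P f \<alpha> \<and> rho Q P f \<alpha> (piL Q x) \<in> geodesic_to Q P f (piL Q x)"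
    unfolding rho_def by (rule theI[of _ "piL Q y"]) (use ex un in blast)+
  then show ?thesis using geo_horo_form[OF x al] by blast
qed

end

lemma cells:
  fixes Q :: "real^'n^'n"
  assumes oU: "open U" and cU: "convex U" and UP: "U \<subseteq> P" and fF: "finite F"
    and Fw: "\<And>v x. v \<in> V \<Longrightarrow> x \<in> U \<Longrightarrow> bil Q x v = 0 \<Longrightarrow> v \<in> F"
    and RU: "R \<subseteq> U"
  shows "finite {D. is_chamber Q P V D \<and> D \<inter> R \<noteq> {}}"
proof -
  define W where "W = P - (\<Union>v\<in>V. perp Q P v)"
  have Wc: "x \<in> W \<longleftrightarrow> x \<in> P \<and> (\<forall>v\<in>V. bil Q x v \<noteq> 0)" for x
    by (auto simp: W_def perp_def)
  define \<Phi> where "\<Phi> z = closure (connected_component_set W z) \<inter> P" for z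
  define \<sigma> where "\<sigma> z = (\<lambda>v. v \<in> F \<and> bil Q z v > 0)" for z
  define X where "X = U \<inter> W"
  have A: "{D. is_chamber Q P V D \<and> D \<inter> R \<noteq> {}} \<subseteq> \<Phi> ` X"
  proof
    fix D assume "D \<in> {D. is_chamber Q P V D \<and> D \<inter> R \<noteq> {}}"
    then obtain x0 y where x0: "x0 \<in> W" "D = \<Phi> x0" and y: "y \<in> D" "y \<in> R"
      unfolding is_chamber_def \<Phi>_def W_def by auto
    have "y \<in> closure (connected_component_set W x0)" using x0 y by (auto simp: \<Phi>_def)
    moreover have "y \<in> U" using y RU by auto
    ultimately have "connected_component_set W x0 \<inter> U \<noteq> {}"
      using oU unfolding closure_iff_nhds_not_empty by blast
    then obtain z where z: "z \<in> connected_component_set W x0" "z \<in> U" by auto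
    have "z \<in> W" using z(1) connected_component_subset by blast
    moreover have "\<Phi> z = D" using connected_component_eq[OF z(1)] x0 by (simp add: \<Phi>_def)
    ultimately show "D \<in> \<Phi> ` X" using z(2) X_def by auto
  qed
  have B: "\<Phi> z1 = \<Phi> z2" if z: "z1 \<in> X" "z2 \<in> X" "\<sigma> z1 = \<sigma> z2" for z1 z2
  proof -
    have "closed_segment z1 z2 \<subseteq> W"
    proof
      fix p assume p: "p \<in> closed_segment z1 z2"
      then obtain u where u: "0 \<le> u" "u \<le> 1" "p = (1 - u) *\<^sub>R z1 + u *\<^sub>R z2"
        by (auto simp: in_segment)
      have pU: "p \<in> U" using closed_segment_subset[of z1 U z2] z cU p X_def by auto
      have "bil Q p v \<noteq> 0" if v: "v \<in> V" for v
      proof (cases "v \<in> F")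
        case True
        have n1: "bil Q z1 v \<noteq> 0" and n2: "bil Q z2 v \<noteq> 0" using z v Wc X_def by auto
        have same: "bil Q z1 v > 0 \<longleftrightarrow> bil Q z2 v > 0"
          using fun_cong[OF z(3), of v] True by (simp add: \<sigma>_def)
        have e: "bil Q p v = (1 - u) * bil Q z1 v + u * bil Q z2 v" using u by simp
        show ?thesis
        proof (cases "bil Q z1 v > 0")
          case True
          then have "bil Q z2 v > 0" using same by simp
          then show ?thesis unfolding e using True u
            by (smt (verit) mult_nonneg_nonneg mult_pos_pos)
        next
          case False
          then have "bil Q z1 v < 0" "bil Q z2 v < 0" using same n1 n2 by auto
          then show ?thesis unfolding e using u
            by (smt (verit) mult_nonneg_nonpos mult_pos_neg)
        qed
      next
        case False
        then show ?thesis using Fw[OF v pU] by auto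
      qed
      then show "p \<in> W" using pU UP Wc by auto
    qed
    then have "closed_segment z1 z2 \<subseteq> connected_component_set W z1"
      by (intro connected_component_maximal) (auto simp: connected_segment)
    then have "z2 \<in> connected_component_set W z1" by auto
    then show ?thesis using connected_component_eq by (metis \<Phi>_def)
  qed
  have C: "finite (\<sigma> ` X)"
  proof (rule finite_subset)
    show "\<sigma> ` X \<subseteq> (\<lambda>A v. v \<in> A) ` Pow F"
    proof
      fix s assume "s \<in> \<sigma> ` X"
      then obtain z where "s = \<sigma> z" by auto
      then have "s = (\<lambda>v. v \<in> {v\<in>F. bil Q z v > 0})" by (auto simp: \<sigma>_def)
      then show "s \<in> (\<lambda>A v. v \<in> A) ` Pow F" by blast
    qed
    show "finite ((\<lambda>A v. v \<in> A) ` Pow F)" using fF by simp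
  qed
  have "\<Phi> ` X \<subseteq> (\<lambda>s. \<Phi> (SOME z. z \<in> X \<and> \<sigma> z = s)) ` (\<sigma> ` X)"
  proof
    fix D assume "D \<in> \<Phi> ` X"
    then obtain z where z: "z \<in> X" "D = \<Phi> z" by auto
    have "\<exists>z'. z' \<in> X \<and> \<sigma> z' = \<sigma> z" using z by blast
    then have "(SOME z'. z' \<in> X \<and> \<sigma> z' = \<sigma> z) \<in> X \<and> \<sigma> (SOME z'. z' \<in> X \<and> \<sigma> z' = \<sigma> z) = \<sigma> z"
      by (rule someI_ex)
    then have "\<Phi> (SOME z'. z' \<in> X \<and> \<sigma> z' = \<sigma> z) = D" using B z by metis
    then show "D \<in> (\<lambda>s. \<Phi> (SOME z. z \<in> X \<and> \<sigma> z = s)) ` (\<sigma> ` X)" using z by blast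
  qed
  then have "finite (\<Phi> ` X)" using C finite_surj by blast
  then show ?thesis using A finite_subset by blast
qed

lemma int_box_finite:
  "finite {y :: real^'n. \<forall>i. y$i \<in> \<int> \<and> \<bar>y$i\<bar> \<le> B}"
proof (rule finite_subset)
  define N where "N = \<lceil>B\<rceil>"
  show "{y :: real^'n. \<forall>i. y$i \<in> \<int> \<and> \<bar>y$i\<bar> \<le> B}
      \<subseteq> (\<lambda>g. \<chi> i. real_of_int (g i)) ` (PiE UNIV (\<lambda>_. {-N..N}))"
  proof
    fix y :: "real^'n" assume y: "y \<in> {y. \<forall>i. y$i \<in> \<int> \<and> \<bar>y$i\<bar> \<le> B}"
    define g where "g i = (SOME k. y$i = real_of_int k)" for i
    have g: "y$i = real_of_int (g i)" for i
    proof -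
      have "\<exists>k. y$i = real_of_int k" using y by (auto elim: Ints_cases)
      then show ?thesis unfolding g_def by (rule someI_ex)
    qed
    have "g i \<in> {-N..N}" for i
    proof -
      have "\<bar>real_of_int (g i)\<bar> \<le> B" using y g[of i] by (metis (mono_tags, lifting) mem_Collect_eq)
      then have "\<bar>g i\<bar> \<le> N" unfolding N_def by (metis ceiling_mono ceiling_of_int of_int_abs)
      then show ?thesis by auto
    qed
    then have "g \<in> PiE UNIV (\<lambda>_. {-N..N})" by auto
    moreover have "y = (\<chi> i. real_of_int (g i))" using g by (simp add: vec_eq_iff)
    ultimately show "y \<in> (\<lambda>g. \<chi> i. real_of_int (g i)) ` (PiE UNIV (\<lambda>_. {-N..N}))" by blast
  qed
  show "finite ((\<lambda>g. \<chi> i. real_of_int (g i)) ` (PiE UNIV (\<lambda>_. {-N..N :: int})))"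
    by (intro finite_imageI finite_PiE) auto
qed

lemma dual_box_finite:
  fixes Q :: "real^'n^'n"
  assumes sym: "transpose Q = Q" and inv: "det Q \<noteq> 0"
  shows "finite {v \<in> dual_lat Q. \<forall>i. \<bar>bil Q v (axis i 1)\<bar> \<le> B}"
proof -
  have e: "bil Q v (axis i 1) = (Q *v v) $ i" for v i
    using bil_sym[OF sym, of v "axis i 1"] by (simp add: bil_def inner_commute cart_eq_inner_axis)
  have lat: "axis i 1 \<in> lat" for i :: 'n by (simp add: lat_def axis_def)
  have inj: "inj ((*v) Q)" using inj_matrix_vector_mult inv invertible_det_nz by blast
  have "(*v) Q ` {v \<in> dual_lat Q. \<forall>i. \<bar>bil Q v (axis i 1)\<bar> \<le> B}
       \<subseteq> {y. \<forall>i. y$i \<in> \<int> \<and> \<bar>y$i\<bar> \<le> B}"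
    using lat by (auto simp: dual_lat_def e[symmetric])
  then have "finite ((*v) Q ` {v \<in> dual_lat Q. \<forall>i. \<bar>bil Q v (axis i 1)\<bar> \<le> B})"
    using int_box_finite finite_subset by blast
  then show ?thesis using finite_imageD inj inj_on_subset by blast
qed

lemma bil_bound: obtains K where "K > 0" "\<And>x y. \<bar>bil Q x y\<bar> \<le> norm x * norm y * K"
proof -
  obtain K where K: "K > 0" "\<And>y. norm (Q *v y) \<le> norm y * K"
    using bounded_linear.pos_bounded[OF matrix_vector_mul_bounded_linear] by blast
  have "\<bar>bil Q x y\<bar> \<le> norm x * norm y * K" for x y
  proof -
    have "\<bar>bil Q x y\<bar> \<le> norm x * norm (Q *v y)" unfolding bil_def by (rule Cauchy_Schwarz_ineq2)
    also have "\<dots> \<le> norm x * (norm y * K)" by (intro mult_left_mono K(2)) simp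
    finally show ?thesis by (simp add: mult.assoc)
  qed
  then show ?thesis using that K(1) by blast
qed







lemma quad_iden:
  "bil Q (l *\<^sub>R A + (1 - l) *\<^sub>R B) (l *\<^sub>R A + (1 - l) *\<^sub>R B)
     = l * bil Q A A + (1 - l) * bil Q B B - l * (1 - l) * bil Q (A - B) (A - B)"
proof -
  have "bil Q (l *\<^sub>R A + (1 - l) *\<^sub>R B) (l *\<^sub>R A + (1 - l) *\<^sub>R B)
     = l*l * bil Q A A + l*(1-l) * bil Q A B + (1-l)*l * bil Q B A + (1-l)*(1-l) * bil Q B B"
    by (simp add: distrib_left)
  moreover have "bil Q (A - B) (A - B) = bil Q A A - bil Q A B - bil Q B A + bil Q B B" by simp
  ultimately show ?thesis by (simp add: algebra_simps)
qed

lemma conv_lt: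
  fixes l m a b r :: real
  assumes "l \<ge> 0" "m \<ge> 0" "l + m = 1" "a < r" "b < r"
  shows "l * a + m * b < r"
proof -
  have "l * a \<le> l * max a b" "m * b \<le> m * max a b" using assms by (auto intro: mult_left_mono)
  moreover have "l * max a b + m * max a b = max a b" using assms(3) by (metis distrib_right mult_1)
  moreover have "max a b < r" using assms by simp
  ultimately show ?thesis by linarith
qed

lemma conv_gt:
  fixes l m a b c :: real
  assumes "l \<ge> 0" "m \<ge> 0" "l + m = 1" "a > c" "b > c"
  shows "l * a + m * b > c"
proof -
  have "- l * a + - m * b < - c" using conv_lt[of l m "-a" "-c" "-b"] assms by simp
  then show ?thesis by simp
qed

lemma int_sq_lt1: assumes "k \<in> \<int>" "k^2 < (1::real)" shows "k = 0"
proof -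
  obtain m :: int where m: "k = of_int m" using assms(1) by (auto elim: Ints_cases)
  have "real_of_int (m^2) < 1" using assms(2) m by simp
  then have "m^2 < 1" by linarith
  then have "m^2 \<le> 0" by linarith
  then have "m = 0" by (metis not_less zero_less_power2)
  then show ?thesis using m by simp
qed

theorem corollary3p13:
  fixes Q :: "real^'n^'n" and P :: "(real^'n) set" and G :: "(real^'n^'n) set"
    and V :: "(real^'n) set" and f :: "real^'n"
  assumes "even_hyperbolic Q"
    and "pos_component Q P"
    and "finite_index_subgroup Q P G"
    and "V \<subseteq> neg_vecs Q \<inter> dual_lat Q"
    and "V1 Q V" and "V2 G V" and "V3 Q P V" and "V4 Q P V"
    and "f \<in> closure P \<inter> lat" and "f \<noteq> 0" and "bil Q f f = 0"
  shows "\<exists>\<alpha>0>0. \<forall>\<alpha>. 0 < \<alpha> \<and> \<alpha> \<le> \<alpha>0 \<longrightarrow>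
           (\<forall>J. compact J \<and> J \<subseteq> horosphere Q P f \<alpha> \<longrightarrow>
              finite {D. is_chamber Q P V D \<and>
                         D \<inter> {x\<in>P. piL Q x \<in> horoball Q P f \<alpha> \<and>
                                   rho Q P f \<alpha> (piL Q x) \<in> J} \<noteq> {}})"
proof -
  note eh = assms(1)
  interpret PCf Q P f
    by unfold_locales (use assms in auto)
  obtain c where c: "c > 0" "\<And>v. v \<in> V \<Longrightarrow> - bil Q v v < c"
    using assms(5) unfolding V1_def by blast
  have Vneg: "bil Q v v < 0" if "v \<in> V" for v using assms(4) that by (auto simp: neg_vecs_def)
  have Vint: "bil Q v f \<in> \<int>" if "v \<in> V" for v
    using assms(4,9) that by (auto simp: dual_lat_def)
  have detQ: "det Q \<noteq> 0" using eh unfolding even_hyperbolic_def by blast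
  have symQ: "transpose Q = Q" using eh unfolding even_hyperbolic_def by blast
  obtain K where K: "K > 0" "\<And>x y. \<bar>bil Q x y\<bar> \<le> norm x * norm y * K" using bil_bound[of Q] by blast
  show ?thesis
  proof (intro exI[of _ "1 / (2 * c)"] conjI allI impI)
    show "0 < 1 / (2 * c)" using c by simp
    fix \<alpha> J
    assume al: "0 < \<alpha> \<and> \<alpha> \<le> 1 / (2 * c)" and J: "compact J \<and> J \<subseteq> horosphere Q P f \<alpha>"
    obtain r where r: "r > 0" "\<And>q. q \<in> J \<Longrightarrow> norm q < r"
      using compact_imp_bounded[of J] J bounded_pos_less by metis
    define R where "R = {x\<in>P. piL Q x \<in> horoball Q P f \<alpha> \<and> rho Q P f \<alpha> (piL Q x) \<in> J}"
    define Ob where "Ob = {z. \<exists>s. norm (sqrt \<alpha> *\<^sub>R z - s *\<^sub>R f) < r}"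
    define h where "h x = (1 / bil Q x f) *\<^sub>R x" for x
    define U where "U = {x\<in>P. bil Q x f > 0 \<and> h x \<in> Ob \<and> bil Q (h x) (h x) > c}"
    define F where "F = {v\<in>V. \<exists>x\<in>U. bil Q x v = 0}"
    have hf: "bil Q (h x) f = 1" if "x \<in> P" for x using P_f[OF that] by (simp add: h_def)
    have RU: "R \<subseteq> U"
    proof
      fix x assume "x \<in> R"
      then have x: "x \<in> P" "piL Q x \<in> horoball Q P f \<alpha>" "rho Q P f \<alpha> (piL Q x) \<in> J"
        by (auto simp: R_def)
      define a where "a = bil Q x f"
      have a: "a > 0" using P_f[OF x(1)] a_def by simp
      have xx: "bil Q x x > 0" using P_pos[OF x(1)] .
      have rat: "a^2 / bil Q x x \<le> \<alpha>" using horoball_ratio[OF x(1,2)] a_def by simp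
      have hh: "bil Q (h x) (h x) = bil Q x x / a^2"
        by (simp add: h_def a_def[symmetric] power2_eq_square)
      have "a^2 \<le> \<alpha> * bil Q x x" using rat xx by (simp add: divide_le_eq)
      also have "\<dots> \<le> (1 / (2 * c)) * bil Q x x" using al xx by (intro mult_right_mono) auto
      finally have "2 * c * a^2 \<le> bil Q x x" using c by (simp add: field_simps)
      then have "2 * c \<le> bil Q x x / a^2" using a by (simp add: field_simps)
      then have c1: "bil Q (h x) (h x) > c" using hh c by simp
      obtain s m where sm: "rho Q P f \<alpha> (piL Q x) = s *\<^sub>R x + m *\<^sub>R f" "s * a = sqrt \<alpha>"
        using rho_form[OF x(1), of \<alpha>] al unfolding a_def by blast
      have s_eq: "s = sqrt \<alpha> / a" using sm(2) a by (simp add: eq_divide_eq)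
      have "sqrt \<alpha> *\<^sub>R h x = s *\<^sub>R x" by (simp add: h_def a_def[symmetric] s_eq)
      then have eq: "sqrt \<alpha> *\<^sub>R h x - (- m) *\<^sub>R f = rho Q P f \<alpha> (piL Q x)"
        unfolding sm(1) by simp
      have "norm (sqrt \<alpha> *\<^sub>R h x - (- m) *\<^sub>R f) < r" unfolding eq by (rule r(2)[OF x(3)])
      then have hO: "h x \<in> Ob" unfolding Ob_def by blast
      show "x \<in> U" unfolding U_def using x(1) a[unfolded a_def] c1 hO by blast
    qed
    have oU: "open U"
    proof -
      have oOb: "open Ob"
      proof -
        have "Ob = (\<Union>s. {z. norm (sqrt \<alpha> *\<^sub>R z - s *\<^sub>R f) < r})" by (auto simp: Ob_def)
        moreover have "open {z. norm (sqrt \<alpha> *\<^sub>R z - s *\<^sub>R f) < r}" for s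
          by (rule open_Collect_less) (intro continuous_intros)+
        ultimately show ?thesis by auto
      qed
      have oS: "open {z. bil Q z z > c}" by (rule open_Collect_less) (intro continuous_intros)+
      have oA: "open {x. bil Q x f > 0}" by (rule open_Collect_less) (intro continuous_intros)+
      have ch: "continuous_on {x. bil Q x f > 0} h" unfolding h_def by (intro continuous_intros) auto
      have "open ({x. bil Q x f > 0} \<inter> h -` (Ob \<inter> {z. bil Q z z > c}))"
        by (rule continuous_open_preimage[OF ch oA]) (use oOb oS in auto)
      moreover have "U = P \<inter> ({x. bil Q x f > 0} \<inter> h -` (Ob \<inter> {z. bil Q z z > c}))"
        by (auto simp: U_def)
      ultimately show ?thesis using P_open by auto
    qed
    have cU: "convex U"
      unfolding convex_def
    proof (intro ballI allI impI)
      fix x y and u v :: real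
      assume x: "x \<in> U" and y: "y \<in> U" and u: "0 \<le> u" and v: "0 \<le> v" and uv: "u + v = 1"
      define p where "p = u *\<^sub>R x + v *\<^sub>R y"
      have xP: "x \<in> P" and yP: "y \<in> P" using x y by (auto simp: U_def)
      have pP: "p \<in> P" using convexD[OF P_convex xP yP u v uv] p_def by simp
      define ax where "ax = bil Q x f"
      define ay where "ay = bil Q y f"
      define ap where "ap = bil Q p f"
      have axp: "ax > 0" "ay > 0" "ap > 0" using P_f xP yP pP ax_def ay_def ap_def by auto
      have ape: "ap = u * ax + v * ay" by (simp add: ap_def ax_def ay_def p_def)
      define l where "l = u * ax / ap"
      define m where "m = v * ay / ap"
      have lm: "l \<ge> 0" "m \<ge> 0" "l + m = 1"
        using axp u v ape by (auto simp: l_def m_def add_divide_distrib[symmetric])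
      have hp: "h p = l *\<^sub>R h x + m *\<^sub>R h y"
        using axp ape[symmetric] by (simp add: h_def p_def l_def m_def ax_def[symmetric] ay_def[symmetric]
            ap_def[symmetric] scaleR_add_right)
      obtain sx where sx: "norm (sqrt \<alpha> *\<^sub>R h x - sx *\<^sub>R f) < r" using x by (auto simp: U_def Ob_def)
      obtain sy where sy: "norm (sqrt \<alpha> *\<^sub>R h y - sy *\<^sub>R f) < r" using y by (auto simp: U_def Ob_def)
      have "sqrt \<alpha> *\<^sub>R h p - (l * sx + m * sy) *\<^sub>R f
          = l *\<^sub>R (sqrt \<alpha> *\<^sub>R h x - sx *\<^sub>R f) + m *\<^sub>R (sqrt \<alpha> *\<^sub>R h y - sy *\<^sub>R f)"
        unfolding hp by (simp add: algebra_simps)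
      then have "norm (sqrt \<alpha> *\<^sub>R h p - (l * sx + m * sy) *\<^sub>R f)
          \<le> l * norm (sqrt \<alpha> *\<^sub>R h x - sx *\<^sub>R f) + m * norm (sqrt \<alpha> *\<^sub>R h y - sy *\<^sub>R f)"
        using lm by (metis (no_types, lifting) abs_of_nonneg norm_scaleR norm_triangle_ineq)
      also have "\<dots> < r" by (rule conv_lt[OF lm sx sy])
      finally have hpO: "h p \<in> Ob" unfolding Ob_def by blast
      have cx: "bil Q (h x) (h x) > c" and cy: "bil Q (h y) (h y) > c" using x y by (auto simp: U_def)
      have d0: "bil Q (h x - h y) (h x - h y) \<le> 0"
        using lorentz(2)[OF eh, of f "h x - h y"] hf[OF xP] hf[OF yP] assms(10,11) by simp
      have iden: "bil Q (l *\<^sub>R h x + m *\<^sub>R h y) (l *\<^sub>R h x + m *\<^sub>R h y)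
          = l * bil Q (h x) (h x) + m * bil Q (h y) (h y) - l * m * bil Q (h x - h y) (h x - h y)"
      proof -
        have m1: "m = 1 - l" using lm by simp
        show ?thesis unfolding m1 by (rule quad_iden)
      qed
      have "l * m * bil Q (h x - h y) (h x - h y) \<le> 0"
        using d0 lm by (simp add: mult_nonneg_nonpos)
      moreover have "l * bil Q (h x) (h x) + m * bil Q (h y) (h y) > c"
        by (rule conv_gt[OF lm cx cy])
      ultimately have "bil Q (h p) (h p) > c" unfolding hp iden by linarith
      then have "p \<in> U" unfolding U_def using pP axp(3)[unfolded ap_def] hpO by blast
      then show "u *\<^sub>R x + v *\<^sub>R y \<in> U" by (simp add: p_def)
    qed
    have fF: "finite F"
    proof -
      define Rb where "Rb = r + (1 + r * r * K) / (2 * sqrt \<alpha>) * norm f"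
      define B where "B = sqrt (c * ((K * Rb)^2 + K))"
      have sa: "sqrt \<alpha> > 0" using al by simp
      have "F \<subseteq> {v \<in> dual_lat Q. \<forall>i. \<bar>bil Q v (axis i 1)\<bar> \<le> B}"
      proof
        fix v assume "v \<in> F"
        then obtain x where v: "v \<in> V" and x: "x \<in> U" "bil Q x v = 0" by (auto simp: F_def)
        have vd: "v \<in> dual_lat Q" using assms(4) v by auto
        have xP: "x \<in> P" using x by (auto simp: U_def)
        define z where "z = h x"
        have zc: "bil Q z z > c" and zO: "z \<in> Ob" using x by (auto simp: U_def z_def)
        have zf: "bil Q z f = 1" using hf[OF xP] z_def by simp
        have vz: "bil Q v z = 0" using x(2) symb[of x v] by (simp add: z_def h_def)
        have zz: "bil Q z z > 0" using zc c by simp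
        have vv: "- bil Q v v \<ge> 0" "- bil Q v v < c" using Vneg[OF v] c(2)[OF v] by auto
        have vf: "bil Q v f = 0"
        proof (rule int_sq_lt1)
          show "bil Q v f \<in> \<int>" using Vint[OF v] .
          have "(bil Q v f)^2 \<le> (- bil Q v v) * ((bil Q f z)^2 / bil Q z z - bil Q f f)"
            by (rule gcs[OF eh zz vz])
          also have "\<dots> = (- bil Q v v) / bil Q z z" using zf symb[of f z] assms(11) by simp
          also have "\<dots> < 1" using vv zc zz by (subst divide_less_eq_1_pos) auto
          finally show "(bil Q v f)^2 < 1" .
        qed
        obtain s where ws: "norm (sqrt \<alpha> *\<^sub>R z - s *\<^sub>R f) < r" using zO by (auto simp: Ob_def)
        define w where "w = sqrt \<alpha> *\<^sub>R z - s *\<^sub>R f"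
        have wf: "bil Q w f = sqrt \<alpha>" using zf assms(11) by (simp add: w_def)
        define t where "t = (1 - bil Q w w) / (2 * sqrt \<alpha>)"
        define wt where "wt = w + t *\<^sub>R f"
        have wtwt: "bil Q wt wt = 1"
        proof -
          have "bil Q wt wt = bil Q w w + 2 * t * sqrt \<alpha>"
            using wf symb[of f w] assms(11) by (simp add: wt_def algebra_simps)
          then show ?thesis using sa by (simp add: t_def field_simps)
        qed
        have vwt: "bil Q v wt = 0" using vz vf by (simp add: wt_def w_def)
        have nw: "norm w < r" using ws w_def by simp
        have "\<bar>bil Q w w\<bar> \<le> norm w * norm w * K" by (rule K(2))
        also have "\<dots> \<le> r * r * K" using nw K(1) r(1) by (intro mult_right_mono mult_mono) auto
        finally have bww: "\<bar>bil Q w w\<bar> \<le> r * r * K" .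
        have e2: "\<bar>2 * sqrt \<alpha>\<bar> = 2 * sqrt \<alpha>" using sa by (intro abs_of_pos) simp
        have "\<bar>t\<bar> = \<bar>1 - bil Q w w\<bar> / (2 * sqrt \<alpha>)" unfolding t_def abs_divide e2 ..
        also have "\<dots> \<le> (1 + r * r * K) / (2 * sqrt \<alpha>)"
        proof (rule divide_right_mono)
          show "\<bar>1 - bil Q w w\<bar> \<le> 1 + r * r * K" using bww by (simp add: abs_le_iff)
        qed (use sa in simp)
        finally have bt: "\<bar>t\<bar> \<le> (1 + r * r * K) / (2 * sqrt \<alpha>)" .
        have "norm wt \<le> norm w + norm (t *\<^sub>R f)" unfolding wt_def by (rule norm_triangle_ineq)
        also have "norm (t *\<^sub>R f) = \<bar>t\<bar> * norm f" by simp
        finally have "norm wt \<le> norm w + \<bar>t\<bar> * norm f" .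
        also have "\<dots> \<le> Rb" unfolding Rb_def using nw bt
          by (intro add_mono mult_right_mono) auto
        finally have nwt: "norm wt \<le> Rb" .
        have "\<bar>bil Q v (axis i 1)\<bar> \<le> B" for i
        proof -
          define g :: "real^'n" where "g = axis i 1"
          have ng: "norm g = 1" by (simp add: g_def)
          have "\<bar>bil Q g wt\<bar> \<le> norm g * norm wt * K" by (rule K(2))
          also have "\<dots> \<le> Rb * K" using ng nwt K(1) by (simp add: mult_right_mono)
          finally have b1: "\<bar>bil Q g wt\<bar> \<le> K * Rb" by (simp add: mult.commute)
          have "\<bar>bil Q g g\<bar> \<le> norm g * norm g * K" by (rule K(2))
          then have b2: "\<bar>bil Q g g\<bar> \<le> K" using ng by simp
          have sq: "(bil Q g wt)^2 \<le> (K * Rb)^2"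
            using power_mono[OF b1 abs_ge_zero, of 2] by simp
          define X where "X = (bil Q g wt)^2 / bil Q wt wt - bil Q g g"
          define Y where "Y = (K * Rb)^2 + K"
          have XY: "X \<le> Y" using sq b2 wtwt by (simp add: X_def Y_def)
          have Y0: "Y \<ge> 0" using K(1) by (simp add: Y_def)
          have "(bil Q v g)^2 \<le> (- bil Q v v) * X" unfolding X_def
            by (rule gcs[OF eh _ vwt]) (use wtwt in simp)
          also have "\<dots> \<le> (- bil Q v v) * Y" using XY vv by (intro mult_left_mono) auto
          also have "\<dots> \<le> c * Y" using vv Y0 by (intro mult_right_mono) auto
          finally have "(bil Q v g)^2 \<le> c * Y" .
          then have "sqrt ((bil Q v g)^2) \<le> sqrt (c * Y)" by (rule real_sqrt_le_mono)
          then show ?thesis by (simp add: B_def Y_def g_def)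
        qed
        then show "v \<in> {v \<in> dual_lat Q. \<forall>i. \<bar>bil Q v (axis i 1)\<bar> \<le> B}" using vd by simp
      qed
      moreover have "finite {v \<in> dual_lat Q. \<forall>i. \<bar>bil Q v (axis i 1)\<bar> \<le> B}"
        by (rule dual_box_finite[OF symQ detQ])
      ultimately show ?thesis by (rule finite_subset)
    qed
    have "finite {D. is_chamber Q P V D \<and> D \<inter> R \<noteq> {}}"
      by (rule cells[OF oU cU _ fF _ RU]) (auto simp: U_def F_def)
    then show "finite {D. is_chamber Q P V D \<and>
                         D \<inter> {x\<in>P. piL Q x \<in> horoball Q P f \<alpha> \<and>
                                   rho Q P f \<alpha> (piL Q x) \<in> J} \<noteq> {}}"
      unfolding R_def .
  qed
qed



end
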